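(* Let $\mathcal{X}$ be a separable infinite-dimensional complex Banach space, $T\in\mathcal{B}(\mathcal{X})$, and $\mathcal{M}$ a nontrivial closed subspace of $\mathcal{X}$. Suppose there are an increasing sequence $(n_k)_{k\in\mathbb{N}}$ of positive integers and two subsets $D_1,D_2\subseteq\mathcal{M}$, each dense in $\mathcal{M}$, such that: (a) for every $y\in D_2$ there is a sequence $(x_k)_{k}$ in $\mathcal{M}$ with $\|x_k\|\to0$ and $T^{n_k}x_k\to y$ as $k\to\infty$; (b) for every $x\in D_1$ (and every $y\in D_2$ with the sequence $(x_k)$ from (a)), $\|T^{n_k}x\|\,\|x_k\|\to0$ as $k\to\infty$; (c) $T^{n_k}\mathcal{M}\subseteq\mathcal{M}$ for all $k$. Then $T$ is $\mathcal{M}$-diskcyclic.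
   Context: $\mathbb{D}=\{\alpha\in\mathbb{C}:|\alpha|\le1\}$. $T$ is $\mathcal{M}$-diskcyclic if there is $x\in\mathcal{X}$ such that $\{\alpha T^nx:\alpha\in\mathbb{D},\ n=0,1,2,\dots\}\cap\mathcal{M}$ is dense in $\mathcal{M}$. *)

theory Defs
  imports "HOL-Analysis.Analysis"
begin

class complex_vector_sc = real_vector +
  fixes scaleC :: "complex \<Rightarrow> 'a \<Rightarrow> 'a" (infixr "*\<^sub>C" 75)
  assumes scaleC_add_right: "a *\<^sub>C (x + y) = a *\<^sub>C x + a *\<^sub>C y"
    and scaleC_add_left: "(a + b) *\<^sub>C x = a *\<^sub>C x + b *\<^sub>C x"
    and scaleC_scaleC: "a *\<^sub>C (b *\<^sub>C x) = (a * b) *\<^sub>C x"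
    and scaleC_one: "1 *\<^sub>C x = x"
    and scaleR_scaleC: "scaleR r x = complex_of_real r *\<^sub>C x"

class complex_normed_sc = complex_vector_sc + real_normed_vector +
  assumes norm_scaleC: "norm (a *\<^sub>C x) = cmod a * norm x"

text \<open>Infinite-dimensional (real and complex dimension are simultaneously finite or infinite).\<close>
definition infinite_dimensional :: "'a::real_vector itself \<Rightarrow> bool" where
  "infinite_dimensional _ \<longleftrightarrow> (\<forall>B::'a set. finite B \<longrightarrow> span B \<noteq> UNIV)"

definition bounded_clinear :: "('a::complex_normed_sc \<Rightarrow> 'b::complex_normed_sc) \<Rightarrow> bool" where
  "bounded_clinear T \<longleftrightarrow> bounded_linear T \<and> (\<forall>c x. T (c *\<^sub>C x) = c *\<^sub>C T x)"

definition closed_csubspace :: "'a::complex_normed_sc set \<Rightarrow> bool" where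
  "closed_csubspace M \<longleftrightarrow> closed M \<and> 0 \<in> M \<and> (\<forall>x\<in>M. \<forall>y\<in>M. x + y \<in> M)
     \<and> (\<forall>c. \<forall>x\<in>M. c *\<^sub>C x \<in> M)"

definition unit_disk :: "complex set" where
  "unit_disk = {\<alpha>. cmod \<alpha> \<le> 1}"

definition M_diskcyclic :: "'a::complex_normed_sc set \<Rightarrow> ('a \<Rightarrow> 'a) \<Rightarrow> bool" where
  "M_diskcyclic M T \<longleftrightarrow>
     (\<exists>x. M \<subseteq> closure ({\<alpha> *\<^sub>C (T ^^ n) x | \<alpha> n. \<alpha> \<in> unit_disk} \<inter> M))"

end

theory Submission
  imports Defs
begin

lemma pow_clinear:
  assumes "bounded_clinear (T::'a::complex_normed_sc \<Rightarrow> 'a)"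
  shows "bounded_linear (T ^^ m) \<and> (\<forall>c x. (T ^^ m) (c *\<^sub>C x) = c *\<^sub>C (T ^^ m) x)"
proof (induction m)
  case 0
  then show ?case by (simp add: bounded_linear_ident id_def)
next
  case (Suc m)
  have bT: "bounded_linear T" and cT: "\<forall>c x. T (c *\<^sub>C x) = c *\<^sub>C T x"
    using assms by (auto simp: bounded_clinear_def)
  have "bounded_linear (\<lambda>x. T ((T ^^ m) x))"
    using Suc bounded_linear_compose[OF bT] by blast
  then show ?case using Suc cT by simp
qed

lemma scaleC_bounded_linear: "bounded_linear (\<lambda>x::'a::complex_normed_sc. a *\<^sub>C x)"
proof (rule bounded_linear_intro[where K="cmod a"])
  fix x y :: 'a show "a *\<^sub>C (x + y) = a *\<^sub>C x + a *\<^sub>C y" by (rule scaleC_add_right)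
next
  fix r :: real and x :: 'a
  show "a *\<^sub>C (r *\<^sub>R x) = r *\<^sub>R (a *\<^sub>C x)"
    by (simp add: scaleR_scaleC scaleC_scaleC mult.commute)
next
  fix x :: 'a show "norm (a *\<^sub>C x) \<le> norm x * cmod a" by (simp add: norm_scaleC)
qed

lemma key_step:
  fixes T :: "'a::complex_normed_sc \<Rightarrow> 'a"
  assumes bc: "bounded_clinear T"
    and cs: "closed_csubspace M"
    and D1: "D1 \<subseteq> M" "M \<subseteq> closure D1"
    and D2: "D2 \<subseteq> M" "M \<subseteq> closure D2"
    and crit: "\<forall>y\<in>D2. \<exists>xs :: nat \<Rightarrow> 'a. (\<forall>k. xs k \<in> M)
            \<and> (\<lambda>k. norm (xs k)) \<longlonglongrightarrow> 0
            \<and> (\<lambda>k. (T ^^ n k) (xs k)) \<longlonglongrightarrow> y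
            \<and> (\<forall>x\<in>D1. (\<lambda>k. norm ((T ^^ n k) x) * norm (xs k)) \<longlonglongrightarrow> 0)"
    and inv: "\<forall>k. (T ^^ n k) ` M \<subseteq> M"
    and U: "open U" "U \<inter> M \<noteq> {}" and V: "open V" "V \<inter> M \<noteq> {}"
  shows "\<exists>u\<in>U \<inter> M. \<exists>k \<alpha>. cmod \<alpha> \<le> 1 \<and> \<alpha> *\<^sub>C (T ^^ n k) u \<in> V"
proof -
  have Madd: "\<And>x y. x \<in> M \<Longrightarrow> y \<in> M \<Longrightarrow> x + y \<in> M"
    and Msc: "\<And>c x. x \<in> M \<Longrightarrow> c *\<^sub>C x \<in> M" using cs by (auto simp: closed_csubspace_def)
  have "U \<inter> D1 \<noteq> {}"
    using U D1 open_Int_closure_eq_empty[of U D1] by blast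
  then obtain x where x: "x \<in> U" "x \<in> D1" by blast
  have "V \<inter> D2 \<noteq> {}"
    using V D2 open_Int_closure_eq_empty[of V D2] by blast
  then obtain y where y: "y \<in> V" "y \<in> D2" by blast
  obtain e1 where e1: "e1 > 0" "ball x e1 \<subseteq> U" using U(1) x(1) open_contains_ball by blast
  obtain e3 where e3: "e3 > 0" "ball y e3 \<subseteq> V" using V(1) y(1) open_contains_ball by blast
  obtain xs where xsM: "\<forall>k. xs k \<in> M" and xs0: "(\<lambda>k. norm (xs k)) \<longlonglongrightarrow> 0"
    and xsy: "(\<lambda>k. (T ^^ n k) (xs k)) \<longlonglongrightarrow> y"
    and xsx: "(\<lambda>k. norm ((T ^^ n k) x) * norm (xs k)) \<longlonglongrightarrow> 0"
    using crit y(2) x(2) by blast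
  define d2 where "d2 = e3 / 2"
  have d2: "d2 > 0" using e3 d2_def by simp
  have ev1: "\<forall>\<^sub>F k in sequentially. norm (xs k) < e1"
    using xs0 e1(1) by (auto dest: order_tendstoD)
  have ev2: "\<forall>\<^sub>F k in sequentially. norm ((T ^^ n k) x) * norm (xs k) < e1 * d2 / 2"
  proof -
    have "0 < e1 * d2 / 2" using e1(1) d2 by simp
    then show ?thesis by (rule order_tendstoD(2)[OF xsx])
  qed
  have ev3: "\<forall>\<^sub>F k in sequentially. dist ((T ^^ n k) (xs k)) y < d2"
    using xsy d2 by (auto simp: tendsto_iff)
  obtain k where k1: "norm (xs k) < e1" and k2: "norm ((T ^^ n k) x) * norm (xs k) < e1 * d2 / 2"
    and k3: "dist ((T ^^ n k) (xs k)) y < d2"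
    using eventually_happens'[OF sequentially_bot eventually_conj[OF ev1 eventually_conj[OF ev2 ev3]]]
    by blast
  define a where "a = norm ((T ^^ n k) x)"
  define b where "b = norm (xs k)"
  define c where "c = max 1 (2 * a / d2)"
  have a0: "a \<ge> 0" and b0: "b \<ge> 0" using a_def b_def by auto
  have c1: "c \<ge> 1" using c_def by simp
  have cb: "c * b < e1"
  proof (cases "2 * a / d2 \<le> 1")
    case True then show ?thesis using k1 b_def c_def by simp
  next
    case False
    then have "c = 2 * a / d2" using c_def by simp
    then have "c * b = 2 * (a * b) / d2" by simp
    also have "\<dots> < e1" using k2 a_def b_def d2 by (simp add: field_simps)
    finally show ?thesis .
  qed
  have ac: "a / c \<le> d2 / 2"
  proof -
    have "2 * a / d2 \<le> c" using c_def by simp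
    then have "2 * a \<le> c * d2" using d2 by (simp add: field_simps)
    then show ?thesis using c1 by (simp add: field_simps)
  qed
  have pl: "bounded_linear (T ^^ n k)" and pc: "\<And>c x. (T ^^ n k) (c *\<^sub>C x) = c *\<^sub>C (T ^^ n k) x"
    using pow_clinear[OF bc, of "n k"] by auto
  define u where "u = x + complex_of_real c *\<^sub>C xs k"
  define \<alpha> where "\<alpha> = inverse (complex_of_real c)"
  have uM: "u \<in> M" unfolding u_def using Madd Msc xsM x(2) D1 by blast
  have "dist u x = norm (complex_of_real c *\<^sub>C xs k)" unfolding u_def by (simp add: dist_norm)
  also have "\<dots> = c * b" using c1 b_def by (simp add: norm_scaleC)
  finally have "u \<in> ball x e1" using cb by (simp add: dist_commute)
  then have uU: "u \<in> U" using e1(2) by blast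
  have cne: "complex_of_real c \<noteq> 0" using c1 by simp
  have eq: "\<alpha> *\<^sub>C (T ^^ n k) u = \<alpha> *\<^sub>C (T ^^ n k) x + (T ^^ n k) (xs k)"
    unfolding u_def using cne
    by (simp add: linear_add[OF bounded_linear.linear[OF pl]] pc scaleC_add_right scaleC_scaleC \<alpha>_def scaleC_one)
  have ca: "cmod \<alpha> = 1 / c" using c1 by (simp add: \<alpha>_def norm_inverse divide_inverse)
  have na: "norm (\<alpha> *\<^sub>C (T ^^ n k) x) = a / c"
    by (simp add: norm_scaleC ca a_def)
  have "dist (\<alpha> *\<^sub>C (T ^^ n k) u) y = norm (\<alpha> *\<^sub>C (T ^^ n k) x + ((T ^^ n k) (xs k) - y))"
    by (simp add: eq dist_norm algebra_simps)
  also have "\<dots> \<le> norm (\<alpha> *\<^sub>C (T ^^ n k) x) + norm ((T ^^ n k) (xs k) - y)"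
    by (rule norm_triangle_ineq)
  also have "\<dots> < e3"
  proof -
    have "norm ((T ^^ n k) (xs k) - y) < d2" using k3 by (simp add: dist_norm)
    then show ?thesis using na ac d2_def e3(1) by linarith
  qed
  finally have "\<alpha> *\<^sub>C (T ^^ n k) u \<in> V" using e3(2) by (auto simp: dist_commute)
  moreover have "cmod \<alpha> \<le> 1" using c1 by (simp add: ca)
  ultimately show ?thesis using uU uM by blast
qed

theorem mainTheorem6:
  fixes T :: "'a::{complex_normed_sc, banach, second_countable_topology} \<Rightarrow> 'a"
    and M D1 D2 :: "'a set"
    and n :: "nat \<Rightarrow> nat"
  assumes "infinite_dimensional TYPE('a)"
    and "bounded_clinear T"
    and "closed_csubspace M" and "M \<noteq> {0}" and "M \<noteq> UNIV"
    and "strict_mono n" and "\<forall>k. n k > 0"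
    and "D1 \<subseteq> M" and "M \<subseteq> closure D1"
    and "D2 \<subseteq> M" and "M \<subseteq> closure D2"
    and "\<forall>y\<in>D2. \<exists>xs :: nat \<Rightarrow> 'a. (\<forall>k. xs k \<in> M)
            \<and> (\<lambda>k. norm (xs k)) \<longlonglongrightarrow> 0
            \<and> (\<lambda>k. (T ^^ n k) (xs k)) \<longlonglongrightarrow> y
            \<and> (\<forall>x\<in>D1. (\<lambda>k. norm ((T ^^ n k) x) * norm (xs k)) \<longlonglongrightarrow> 0)"
    and "\<forall>k. (T ^^ n k) ` M \<subseteq> M"
  shows "M_diskcyclic M T"
proof -
  note bc = assms(2) and cs = assms(3) and inv = assms(13)
  have key: "\<And>U V. open U \<Longrightarrow> U \<inter> M \<noteq> {} \<Longrightarrow> open V \<Longrightarrow> V \<inter> M \<noteq> {} \<Longrightarrow>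
      \<exists>u\<in>U \<inter> M. \<exists>k \<alpha>. cmod \<alpha> \<le> 1 \<and> \<alpha> *\<^sub>C (T ^^ n k) u \<in> V"
    using key_step[OF bc cs assms(8-13)] by blast
  have Msc: "\<And>c x. x \<in> M \<Longrightarrow> c *\<^sub>C x \<in> M" and M0: "0 \<in> M" and clM: "closed M"
    using cs by (auto simp: closed_csubspace_def)
  obtain B :: "'a set set" where Bc: "countable B" and Bo: "\<And>C. C \<in> B \<Longrightarrow> open C"
    and Bb: "\<And>S. open S \<Longrightarrow> \<exists>U. U \<subseteq> B \<and> S = \<Union>U"
    using univ_second_countable by blast
  define G where "G V = {u \<in> M. \<exists>k \<alpha>. cmod \<alpha> \<le> 1 \<and> \<alpha> *\<^sub>C (T ^^ n k) u \<in> V}" for V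
  define \<G> where "\<G> = G ` {V \<in> B. V \<inter> M \<noteq> {}}"
  have cont: "continuous_on UNIV (\<lambda>u. \<alpha> *\<^sub>C (T ^^ m) u)" for \<alpha> m
  proof -
    have "bounded_linear (\<lambda>u. \<alpha> *\<^sub>C (T ^^ m) u)"
      using bounded_linear_compose[OF scaleC_bounded_linear, of "T ^^ m" \<alpha>]
        pow_clinear[OF bc, of m] by blast
    then show ?thesis by (simp add: linear_continuous_on)
  qed
  have Gopen: "openin (top_of_set M) (G V)" if "open V" for V
  proof -
    have "G V = M \<inter> (\<Union>k. \<Union>\<alpha>\<in>{\<alpha>. cmod \<alpha> \<le> 1}. (\<lambda>u. \<alpha> *\<^sub>C (T ^^ n k) u) -` V)"
      unfolding G_def by auto
    moreover have "open (\<Union>k. \<Union>\<alpha>\<in>{\<alpha>. cmod \<alpha> \<le> 1}. (\<lambda>u. \<alpha> *\<^sub>C (T ^^ n k) u) -` V)"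
      using cont that by (intro open_Union ballI) (auto intro: open_vimage)
    ultimately show ?thesis by (auto simp: openin_open)
  qed
  have Gdense: "(top_of_set M) closure_of (G V) = topspace (top_of_set M)"
    if "V \<in> B" "V \<inter> M \<noteq> {}" for V
    unfolding dense_intersects_open
  proof (intro allI impI)
    fix W assume W: "openin (top_of_set M) W \<and> W \<noteq> {}"
    then obtain U where U: "open U" "W = M \<inter> U" by (auto simp: openin_open)
    then have "U \<inter> M \<noteq> {}" using W by blast
    from key[OF U(1) this Bo[OF that(1)] that(2)]
    obtain u k \<alpha> where "u \<in> U \<inter> M" "cmod \<alpha> \<le> 1" "\<alpha> *\<^sub>C (T ^^ n k) u \<in> V" by blast
    then have "u \<in> G V \<inter> W" using U unfolding G_def by blast
    then show "G V \<inter> W \<noteq> {}" by blast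
  qed
  have cm: "completely_metrizable_space (top_of_set M)"
    by (rule completely_metrizable_space_closedin[OF completely_metrizable_space_euclidean])
       (use clM closed_closedin in blast)
  have "(top_of_set M) closure_of \<Inter>\<G> = topspace (top_of_set M)"
  proof (rule Baire_category)
    show "completely_metrizable_space (top_of_set M) \<or>
      locally_compact_space (top_of_set M) \<and> regular_space (top_of_set M)" using cm by blast
    show "countable \<G>" unfolding \<G>_def using Bc by simp
    fix S assume "S \<in> \<G>"
    then obtain V where "V \<in> B" "V \<inter> M \<noteq> {}" "S = G V" unfolding \<G>_def by blast
    then show "openin (top_of_set M) S \<and> (top_of_set M) closure_of S = topspace (top_of_set M)"
      using Gopen Gdense Bo by blast
  qed
  then have "\<Inter>\<G> \<inter> M \<noteq> {}"
    unfolding dense_intersects_open using M0 by (metis empty_iff openin_topspace topspace_euclidean_subtopology)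
  then obtain u where u: "u \<in> M" "\<And>V. V \<in> B \<Longrightarrow> V \<inter> M \<noteq> {} \<Longrightarrow> u \<in> G V"
    unfolding \<G>_def by blast
  show ?thesis unfolding M_diskcyclic_def
  proof (intro exI subsetI)
    fix m assume m: "m \<in> M"
    show "m \<in> closure ({\<alpha> *\<^sub>C (T ^^ j) u | \<alpha> j. \<alpha> \<in> unit_disk} \<inter> M)"
      unfolding closure_approachable
    proof (intro allI impI)
      fix e :: real assume e: "e > 0"
      obtain UU where UU: "UU \<subseteq> B" "ball m e = \<Union>UU" using Bb[of "ball m e"] by auto
      then obtain V where V: "V \<in> B" "m \<in> V" "V \<subseteq> ball m e" using e by (metis UnionE Union_upper centre_in_ball subsetD)
      then have "u \<in> G V" using u m by blast
      then obtain k \<alpha> where ka: "cmod \<alpha> \<le> 1" "\<alpha> *\<^sub>C (T ^^ n k) u \<in> V" unfolding G_def by blast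
      have "(T ^^ n k) u \<in> M" using inv u(1) by blast
      then have "\<alpha> *\<^sub>C (T ^^ n k) u \<in> M" using Msc by blast
      moreover have "dist (\<alpha> *\<^sub>C (T ^^ n k) u) m < e" using ka V by (auto simp: dist_commute)
      ultimately show "\<exists>y\<in>{\<alpha> *\<^sub>C (T ^^ j) u | \<alpha> j. \<alpha> \<in> unit_disk} \<inter> M. dist y m < e"
        using ka(1) unfolding unit_disk_def by blast
    qed
  qed
qed

end
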